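(* Let $\Gamma=(V,E)$ be a simple connected graph of order $n$ and maximum degree $\Delta$, and let $\mu$ be the algebraic connectivity of $\Gamma$. Then the strong defensive alliance number of $\Gamma$ satisfies $$\hat{a}(\Gamma)\ge \left\lceil\frac{n\left(\mu-\left\lfloor\frac{\Delta}{2}\right\rfloor\right)}{\mu}\right\rceil.$$
   Context: For $S\subseteq V$ and $v\in V$, $N_S(v)=\{u\in S: u\sim v\}$ and $N_{V\setminus S}(v)=\{u\in V\setminus S: u\sim v\}$. A nonempty set $S\subseteq V$ is a strong defensive alliance if $|N_S(v)|\ge |N_{V\setminus S}(v)|$ for every $v\in S$. $\hat a(\Gamma)$ is the minimum cardinality of a strong defensive alliance in $\Gamma$. The algebraic connectivity is the second smallest eigenvalue of the Laplacian matrix of $\Gamma$. *)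

theory Defs
  imports "Jordan_Normal_Form.Char_Poly"
begin

definition simple_graph :: "nat \<Rightarrow> (nat \<Rightarrow> nat \<Rightarrow> bool) \<Rightarrow> bool" where
  "simple_graph n adj \<longleftrightarrow>
     (\<forall>u v. adj u v \<longrightarrow> u < n \<and> v < n) \<and>
     (\<forall>u v. adj u v \<longrightarrow> adj v u) \<and>
     (\<forall>u. \<not> adj u u)"

definition connected_graph :: "nat \<Rightarrow> (nat \<Rightarrow> nat \<Rightarrow> bool) \<Rightarrow> bool" where
  "connected_graph n adj \<longleftrightarrow> (\<forall>u<n. \<forall>v<n. adj\<^sup>*\<^sup>* u v)"

definition degree :: "nat \<Rightarrow> (nat \<Rightarrow> nat \<Rightarrow> bool) \<Rightarrow> nat \<Rightarrow> nat" where
  "degree n adj v = card {u. u < n \<and> adj v u}"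

definition max_degree :: "nat \<Rightarrow> (nat \<Rightarrow> nat \<Rightarrow> bool) \<Rightarrow> nat" where
  "max_degree n adj = Max (degree n adj ` {0..<n})"

definition laplacian :: "nat \<Rightarrow> (nat \<Rightarrow> nat \<Rightarrow> bool) \<Rightarrow> real mat" where
  "laplacian n adj = mat n n (\<lambda>(i, j).
     if i = j then real (degree n adj i) else if adj i j then -1 else 0)"

text \<open>The eigenvalues of a real matrix whose characteristic polynomial splits over
  the reals (e.g. a real symmetric matrix), listed in nondecreasing order with
  multiplicity.\<close>
definition sorted_eigenvalues :: "real mat \<Rightarrow> real list" where
  "sorted_eigenvalues A = (THE xs. sorted xs \<and> char_poly A = (\<Prod>a\<leftarrow>xs. [:- a, 1:]))"

definition algebraic_connectivity :: "nat \<Rightarrow> (nat \<Rightarrow> nat \<Rightarrow> bool) \<Rightarrow> real" where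
  "algebraic_connectivity n adj = sorted_eigenvalues (laplacian n adj) ! 1"

definition strong_defensive_alliance :: "nat \<Rightarrow> (nat \<Rightarrow> nat \<Rightarrow> bool) \<Rightarrow> nat set \<Rightarrow> bool" where
  "strong_defensive_alliance n adj S \<longleftrightarrow>
     S \<noteq> {} \<and> S \<subseteq> {0..<n} \<and>
     (\<forall>v\<in>S. card {u\<in>S. adj u v} \<ge> card {u\<in>{0..<n} - S. adj u v})"

definition strong_defensive_alliance_number :: "nat \<Rightarrow> (nat \<Rightarrow> nat \<Rightarrow> bool) \<Rightarrow> nat" where
  "strong_defensive_alliance_number n adj =
     Min {card S | S. strong_defensive_alliance n adj S}"

end

theory Submission
  imports Defs
begin

definition hhw :: "nat \<Rightarrow> real vec \<Rightarrow> real vec" where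
  "hhw n v = vec n (\<lambda>i. v $ i - (if i = 0 then 1 else 0))"

definition hh :: "nat \<Rightarrow> real vec \<Rightarrow> real mat" where
  "hh n v = mat n n (\<lambda>(i,j). (if i = j then 1 else 0) - 2 / (hhw n v \<bullet> hhw n v) * (hhw n v $ i) * (hhw n v $ j))"

lemma hh_carrier[simp]: "hh n v \<in> carrier_mat n n" by (simp add: hh_def)

lemma hh_transpose[simp]: "transpose_mat (hh n v) = hh n v"
  by (rule eq_matI, auto simp: hh_def)

lemma hh_sq: "hh n v * hh n v = 1\<^sub>m n"
proof (rule eq_matI)
  let ?w = "hhw n v"
  define S where "S = ?w \<bullet> ?w"
  define c where "c = 2 / S"
  have S: "S = (\<Sum>k<n. ?w $ k * ?w $ k)" unfolding S_def scalar_prod_def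
    by (simp add: hhw_def lessThan_atLeast0)
  have cS: "c * c * S = 2 * c" unfolding c_def by (cases "S = 0", auto simp: field_simps power2_eq_square)
  fix i j assume i: "i < dim_row (1\<^sub>m n)" and j: "j < dim_col (1\<^sub>m n)"
  hence i: "i < n" and j: "j < n" by auto
  have "(hh n v * hh n v) $$ (i,j) = (\<Sum>k<n. ((if i = k then 1 else 0) - c * ?w $ i * ?w $ k) * ((if k = j then 1 else 0) - c * ?w $ k * ?w $ j))"
    using i j unfolding hh_def c_def S_def by (simp add: scalar_prod_def lessThan_atLeast0 row_def col_def)
  also have "\<dots> = (\<Sum>k<n. (if i = k then (if k = j then 1 else 0) else 0)) - (\<Sum>k<n. (if i = k then c * ?w $ k * ?w $ j else 0))
     - (\<Sum>k<n. (if k = j then c * ?w $ i * ?w $ k else 0)) + c * c * ?w $ i * ?w $ j * (\<Sum>k<n. ?w $ k * ?w $ k)"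
  proof -
    have "\<And>k. ((if i = k then 1 else 0) - c * ?w $ i * ?w $ k) * ((if k = j then 1 else 0) - c * ?w $ k * ?w $ j)
      = (if i = k then (if k = j then 1 else 0) else 0) - (if i = k then c * ?w $ k * ?w $ j else 0)
       - (if k = j then c * ?w $ i * ?w $ k else 0) + c * c * ?w $ i * ?w $ j * (?w $ k * ?w $ k)"
      by (auto simp: algebra_simps)
    then show ?thesis by (simp add: sum.distrib sum_subtractf sum_distrib_left)
  qed
  also have "\<dots> = (if i = j then 1 else 0) - 2 * c * ?w $ i * ?w $ j + c * c * S * ?w $ i * ?w $ j"
    using i j by (simp add: S)
  also have "\<dots> = 1\<^sub>m n $$ (i,j)" using i j cS by simp
  finally show "(hh n v * hh n v) $$ (i,j) = 1\<^sub>m n $$ (i,j)" .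
qed (auto simp: hh_def)

lemma hh_col0:
  assumes v: "v \<in> carrier_vec n" and vv: "v \<bullet> v = 1" and n: "0 < n"
  shows "hh n v *\<^sub>v unit_vec n 0 = v"
proof (rule eq_vecI)
  let ?w = "hhw n v"
  define S where "S = ?w \<bullet> ?w"
  have S: "S = (\<Sum>k<n. ?w $ k * ?w $ k)" unfolding S_def scalar_prod_def
    by (simp add: hhw_def lessThan_atLeast0)
  have vv': "(\<Sum>k<n. v $ k * v $ k) = 1" using vv v unfolding scalar_prod_def
    by (simp add: lessThan_atLeast0)
  have "\<And>k. k < n \<Longrightarrow> ?w $ k * ?w $ k = v $ k * v $ k - (if k = 0 then 2 * v $ 0 - 1 else 0)"
    by (auto simp: hhw_def algebra_simps)
  hence "S = (\<Sum>k<n. v $ k * v $ k - (if k = 0 then 2 * v $ 0 - 1 else 0))"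
    unfolding S by (intro sum.cong) auto
  also have "\<dots> = 2 - 2 * v $ 0" using vv' n by (simp add: sum_subtractf)
  finally have S2: "S = 2 - 2 * v $ 0" .
  have w0: "?w $ 0 = v $ 0 - 1" using n by (simp add: hhw_def)
  fix i assume "i < dim_vec v"
  hence i: "i < n" using v by auto
  have "(hh n v *\<^sub>v unit_vec n 0) $ i = (if i = 0 then 1 else 0) - 2 / S * ?w $ i * ?w $ 0"
    using i n unfolding S_def by (simp add: hh_def)
  also have "\<dots> = v $ i"
  proof (cases "S = 0")
    case True
    hence "\<forall>k\<in>{..<n}. ?w $ k * ?w $ k = 0" unfolding S
      by (subst sum_nonneg_eq_0_iff[symmetric], auto)
    hence "?w $ i = 0" using i by auto
    thus ?thesis using True i by (simp add: hhw_def split: if_splits)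
  next
    case False
    hence c0: "2 / S * ?w $ 0 = -1" using S2 w0 by (simp add: field_simps)
    have e: "2 / S * ?w $ i * ?w $ 0 = ?w $ i * (2 / S * ?w $ 0)" by (metis mult.commute mult.assoc)
    show ?thesis unfolding e c0 using i by (simp add: hhw_def)
  qed
  finally show "(hh n v *\<^sub>v unit_vec n 0) $ i = v $ i" .
qed (insert v, auto simp: hh_def)

lemma sym_real_eigenvalue:
  fixes A :: "real mat"
  assumes A: "A \<in> carrier_mat n n" and sym: "transpose_mat A = A" and n: "0 < n"
  shows "\<exists>e. eigenvalue A e"
proof -
  let ?Ac = "map_mat complex_of_real A"
  have Ac: "?Ac \<in> carrier_mat n n" using A by simp
  obtain as where cp: "char_poly ?Ac = (\<Prod>a\<leftarrow>as. [:- a, 1:])" and len: "length as = n"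
    using char_poly_factorized[OF Ac] by blast
  then obtain c rest where as: "as = c # rest" using n by (cases as, auto)
  have "poly (char_poly ?Ac) c = 0" unfolding cp as by simp
  hence "eigenvalue ?Ac c" using eigenvalue_root_char_poly[OF Ac] by simp
  then obtain v where v: "v \<in> carrier_vec n" "v \<noteq> 0\<^sub>v n" and ev: "?Ac *\<^sub>v v = c \<cdot>\<^sub>v v"
    unfolding eigenvalue_def eigenvector_def using Ac by auto
  have Asym: "\<And>i j. i < n \<Longrightarrow> j < n \<Longrightarrow> A $$ (j,i) = A $$ (i,j)"
    using sym A by (metis carrier_matD index_transpose_mat(1))
  define s where "s = (\<Sum>i<n. cnj (v $ i) * (?Ac *\<^sub>v v) $ i)"
  define N where "N = (\<Sum>i<n. cnj (v $ i) * v $ i)"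
  have "s = (\<Sum>i<n. c * (cnj (v $ i) * v $ i))" unfolding s_def ev using v by (intro sum.cong) auto
  hence sN: "s = c * N" by (simp add: N_def sum_distrib_left)
  have s2: "s = (\<Sum>i<n. \<Sum>j<n. cnj (v $ i) * complex_of_real (A $$ (i,j)) * v $ j)"
  proof -
    have row: "\<And>i. i < n \<Longrightarrow> (?Ac *\<^sub>v v) $ i = (\<Sum>j<n. complex_of_real (A $$ (i,j)) * v $ j)"
      using A v by (auto simp: mult_mat_vec_def scalar_prod_def lessThan_atLeast0)
    show ?thesis unfolding s_def by (intro sum.cong) (auto simp: row sum_distrib_left mult.assoc)
  qed
  have "cnj s = (\<Sum>i<n. \<Sum>j<n. v $ i * complex_of_real (A $$ (i,j)) * cnj (v $ j))"
    unfolding s2 by simp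
  also have "\<dots> = (\<Sum>j<n. \<Sum>i<n. v $ i * complex_of_real (A $$ (i,j)) * cnj (v $ j))"
    by (rule sum.swap)
  also have "\<dots> = s" unfolding s2
  proof (intro sum.cong refl)
    fix a b assume a: "a \<in> {..<n}" and b: "b \<in> {..<n}"
    have "A $$ (b,a) = A $$ (a,b)" using a b Asym by auto
    thus "v $ b * complex_of_real (A $$ (b, a)) * cnj (v $ a) = cnj (v $ a) * complex_of_real (A $$ (a, b)) * v $ b"
      by (simp add: ac_simps)
  qed
  finally have "cnj s = s" .
  hence ims: "Im s = 0" by (metis complex.sel(2) cnj.sel(2) add.inverse_unique add_eq_0_iff2 neg_equal_zero)
  have Nr: "N = complex_of_real (\<Sum>i<n. (Re (v $ i))^2 + (Im (v $ i))^2)"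
    unfolding N_def by (simp add: complex_mult_cnj mult.commute)
  obtain i where i: "i < n" "v $ i \<noteq> 0" using v by (metis carrier_vecD eq_vecI index_zero_vec(1) index_zero_vec(2))
  have "(\<Sum>i<n. (Re (v $ i))^2 + (Im (v $ i))^2) > 0"
    by (rule sum_pos2[of _ i], insert i, auto simp: complex_eq_iff add_nonneg_pos add_pos_nonneg)
  hence N0: "N \<noteq> 0" unfolding Nr by (metis less_irrefl of_real_eq_0_iff)
  have "c = s / N" using sN N0 by simp
  hence "Im c = 0" unfolding Nr using ims by (simp only: Im_divide_of_real)
  hence cr: "c = complex_of_real (Re c)" by (simp add: complex_eq_iff)
  have "complex_of_real (poly (char_poly A) (Re c)) = poly (char_poly ?Ac) c"
    unfolding of_real_hom.char_poly_hom[OF A] by (subst cr, simp)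
  also have "\<dots> = 0" by fact
  finally have "poly (char_poly A) (Re c) = 0" by simp
  thus ?thesis using eigenvalue_root_char_poly[OF A] by blast
qed

definition mdiag :: "nat \<Rightarrow> real list \<Rightarrow> real mat" where
  "mdiag n es = mat n n (\<lambda>(i,j). if i = j then es ! i else 0)"

lemma mdiag_carrier[simp]: "mdiag n es \<in> carrier_mat n n" by (simp add: mdiag_def)

lemma poly_prod_lin_root: "poly (\<Prod>a\<leftarrow>es. [:- a, 1:]) (x::real) = 0 \<longleftrightarrow> x \<in> set es"
  by (induct es) auto

lemma spectral:
  fixes A :: "real mat"
  assumes "A \<in> carrier_mat n n" and "transpose_mat A = A"
  shows "\<exists>P es. P \<in> carrier_mat n n \<and> transpose_mat P * P = 1\<^sub>m n \<and> length es = n \<and> sorted es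
     \<and> char_poly A = (\<Prod>a\<leftarrow>es. [:- a, 1:]) \<and> A = P * mdiag n es * transpose_mat P"
  using assms
proof (induct n arbitrary: A)
  case 0
  have cp: "char_poly A = 1"
  proof -
    from degree_monic_char_poly[OF 0(1)] have "Polynomial.degree (char_poly A) = 0" "coeff (char_poly A) 0 = 1" by auto
    thus ?thesis by (metis degree0_coeffs coeff_pCons_0 one_pCons)
  qed
  show ?case
    by (rule exI[of _ "1\<^sub>m 0"], rule exI[of _ "[]"], insert 0 cp, auto intro!: eq_matI)
next
  case (Suc m A)
  let ?n = "Suc m"
  have A: "A \<in> carrier_mat ?n ?n" and sym: "transpose_mat A = A" by fact+
  define R where "R = {r. poly (char_poly A) r = 0}"
  have cp0: "char_poly A \<noteq> 0" using degree_monic_char_poly[OF A] by auto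
  have finR: "finite R" unfolding R_def by (rule poly_roots_finite[OF cp0])
  obtain e0 where "eigenvalue A e0" using sym_real_eigenvalue[OF A sym] by auto
  hence "e0 \<in> R" unfolding R_def using eigenvalue_root_char_poly[OF A] by auto
  hence Rne: "R \<noteq> {}" by auto
  define e where "e = Min R"
  have eR: "e \<in> R" unfolding e_def using finR Rne by auto
  have emin: "\<And>x. x \<in> R \<Longrightarrow> e \<le> x" unfolding e_def using finR by auto
  have "eigenvalue A e" using eR unfolding R_def using eigenvalue_root_char_poly[OF A] by auto
  then obtain v0 where v0: "v0 \<in> carrier_vec ?n" "v0 \<noteq> 0\<^sub>v ?n" and ev0: "A *\<^sub>v v0 = e \<cdot>\<^sub>v v0"
    unfolding eigenvalue_def eigenvector_def using A by auto
  define v where "v = (1 / sqrt (v0 \<bullet> v0)) \<cdot>\<^sub>v v0"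
  have v: "v \<in> carrier_vec ?n" unfolding v_def using v0 by auto
  define s where "s = v0 \<bullet> v0"
  have ss: "s = (\<Sum>i<?n. v0 $ i * v0 $ i)" unfolding s_def using v0 by (simp add: scalar_prod_def lessThan_atLeast0)
  obtain i where i: "i < ?n" "v0 $ i \<noteq> 0" using v0 by (metis carrier_vecD eq_vecI index_zero_vec(1) index_zero_vec(2))
  have spos: "s > 0" unfolding ss by (rule sum_pos2[of _ i], insert i, auto simp: zero_less_mult_iff)
  have "v \<bullet> v = (1 / sqrt s) * ((1 / sqrt s) * s)" unfolding v_def s_def using v0
    by (simp add: scalar_prod_smult_left scalar_prod_smult_right)
  also have "\<dots> = s / (sqrt s * sqrt s)" by simp
  also have "sqrt s * sqrt s = s" using spos by simp
  finally have vv: "v \<bullet> v = 1" using spos by simp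
  have "A *\<^sub>v v = (1 / sqrt s) \<cdot>\<^sub>v (A *\<^sub>v v0)" unfolding v_def s_def by (rule mult_mat_vec[OF A v0(1)])
  also have "\<dots> = e \<cdot>\<^sub>v v" unfolding ev0 v_def s_def by (simp add: smult_smult_assoc mult.commute)
  finally have ev: "A *\<^sub>v v = e \<cdot>\<^sub>v v" .
  define H where "H = hh ?n v"
  have H: "H \<in> carrier_mat ?n ?n" unfolding H_def by simp
  have HT: "transpose_mat H = H" unfolding H_def by simp
  have HH: "H * H = 1\<^sub>m ?n" unfolding H_def by (rule hh_sq)
  have He0: "H *\<^sub>v unit_vec ?n 0 = v" unfolding H_def by (rule hh_col0[OF v vv], simp)
  have HHX: "\<And>X k. X \<in> carrier_mat ?n k \<Longrightarrow> H * (H * X) = X"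
    using HH H by (metis assoc_mult_mat left_mult_one_mat)
  have Hv: "H *\<^sub>v v = unit_vec ?n 0"
    unfolding He0[symmetric] using H HH by (simp flip: assoc_mult_mat_vec)
  define A' where "A' = H * A * H"
  have A': "A' \<in> carrier_mat ?n ?n" unfolding A'_def using H A by simp
  have A'T: "transpose_mat A' = A'" unfolding A'_def using H A HT sym
    by (simp add: transpose_mult[of _ ?n ?n _ ?n] )
  have A'e0: "A' *\<^sub>v unit_vec ?n 0 = e \<cdot>\<^sub>v unit_vec ?n 0"
  proof -
    have "A' *\<^sub>v unit_vec ?n 0 = H *\<^sub>v (A *\<^sub>v (H *\<^sub>v unit_vec ?n 0))"
      unfolding A'_def using H A
      by (subst assoc_mult_mat_vec[of _ ?n ?n _ ?n], auto)
    also have "\<dots> = H *\<^sub>v (e \<cdot>\<^sub>v v)" unfolding He0 ev ..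
    also have "\<dots> = e \<cdot>\<^sub>v (H *\<^sub>v v)" by (rule mult_mat_vec[OF H v])
    finally show ?thesis unfolding Hv .
  qed
  have A'col: "\<And>i. i < ?n \<Longrightarrow> A' $$ (i, 0) = (if i = 0 then e else 0)"
  proof -
    fix i assume i: "i < ?n"
    have "A' $$ (i, 0) = (A' *\<^sub>v unit_vec ?n 0) $ i" using A' i by simp
    thus "A' $$ (i, 0) = (if i = 0 then e else 0)" unfolding A'e0 using i by simp
  qed
  have A'row: "\<And>j. j < ?n \<Longrightarrow> A' $$ (0, j) = (if j = 0 then e else 0)"
  proof -
    fix j assume j: "j < ?n"
    have "A' $$ (0, j) = transpose_mat A' $$ (j, 0)" using A' j by simp
    thus "A' $$ (0, j) = (if j = 0 then e else 0)" unfolding A'T using A'col[OF j] by simp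
  qed
  define A3 where "A3 = mat m m (\<lambda>(i,j). A' $$ (Suc i, Suc j))"
  have A3: "A3 \<in> carrier_mat m m" unfolding A3_def by simp
  have A3T: "transpose_mat A3 = A3"
  proof (rule eq_matI)
    fix i j assume "i < dim_row A3" "j < dim_col A3"
    hence i: "i < m" and j: "j < m" using A3 by auto
    have "A' $$ (Suc j, Suc i) = transpose_mat A' $$ (Suc i, Suc j)" using A' i j by simp
    thus "transpose_mat A3 $$ (i, j) = A3 $$ (i, j)" unfolding A'T A3_def using i j by simp
  qed (use A3 in auto)
  define E where "E = mat 1 1 (\<lambda>_. e)"
  have E: "E \<in> carrier_mat 1 1" unfolding E_def by simp
  have A'blk: "A' = four_block_mat E (0\<^sub>m 1 m) (0\<^sub>m m 1) A3"
  proof (rule eq_matI)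
    fix i j assume "i < dim_row (four_block_mat E (0\<^sub>m 1 m) (0\<^sub>m m 1) A3)"
      "j < dim_col (four_block_mat E (0\<^sub>m 1 m) (0\<^sub>m m 1) A3)"
    hence i: "i < ?n" and j: "j < ?n" using E A3 by auto
    show "A' $$ (i, j) = four_block_mat E (0\<^sub>m 1 m) (0\<^sub>m m 1) A3 $$ (i, j)"
      using i j A'col A'row unfolding E_def A3_def
      by (cases i; cases j; simp)
  qed (use E A3 A' in auto)
  from Suc(1)[OF A3 A3T] obtain P3 es3 where P3: "P3 \<in> carrier_mat m m"
    and P3P3: "transpose_mat P3 * P3 = 1\<^sub>m m" and les3: "length es3 = m" and ses3: "sorted es3"
    and cp3: "char_poly A3 = (\<Prod>a\<leftarrow>es3. [:- a, 1:])" and A3eq: "A3 = P3 * mdiag m es3 * transpose_mat P3"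
    by blast
  have HA'H: "H * A' * H = A"
  proof -
    have "A' = H * (A * H)" unfolding A'_def using H A by simp
    hence "H * A' = A * H" using HHX[of "A * H" ?n] H A by simp
    hence "H * A' * H = A * (H * H)" using H A by simp
    thus ?thesis unfolding HH using A by simp
  qed
  have simA: "similar_mat A A'" unfolding similar_mat_def similar_mat_wit_def Let_def
    by (rule exI[of _ H], rule exI[of _ H], insert A A' H HH HA'H, auto)
  have "char_poly A = char_poly A'" by (rule char_poly_similar[OF simA])
  also have "\<dots> = char_poly E * char_poly A3" unfolding A'blk
    by (rule char_poly_four_block_zeros_col[OF E _ A3], simp)
  also have "char_poly E = [:- e, 1:]"
    by (simp add: E_def char_poly_defs det_def sign_def)
  finally have cpA: "char_poly A = (\<Prod>a\<leftarrow>e # es3. [:- a, 1:])" unfolding cp3 by simp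
  have sorted: "sorted (e # es3)"
  proof -
    have "\<forall>x\<in>set es3. e \<le> x"
    proof
      fix x assume "x \<in> set es3"
      hence "poly (char_poly A) x = 0" unfolding cpA by (simp add: poly_prod_lin_root)
      thus "e \<le> x" using emin unfolding R_def by auto
    qed
    thus ?thesis using ses3 by simp
  qed
  define F where "F = four_block_mat (1\<^sub>m 1) (0\<^sub>m 1 m) (0\<^sub>m m 1) P3"
  have F: "F \<in> carrier_mat ?n ?n" unfolding F_def using four_block_carrier_mat[of "1\<^sub>m 1" 1 1 P3 m m] P3 by simp
  have FT: "transpose_mat F = four_block_mat (1\<^sub>m 1) (0\<^sub>m 1 m) (0\<^sub>m m 1) (transpose_mat P3)"
    unfolding F_def using P3 by (subst transpose_four_block_mat[of _ 1 1 _ m _ m], auto)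
  have FTF: "transpose_mat F * F = 1\<^sub>m ?n"
    unfolding FT unfolding F_def using P3 P3P3
    by (simp add: mult_four_block_mat[of _ 1 1 _ m _ m _ _ 1 _ m])
  define D3 where "D3 = mdiag m es3"
  have D3: "D3 \<in> carrier_mat m m" unfolding D3_def by simp
  have Dblk: "mdiag ?n (e # es3) = four_block_mat E (0\<^sub>m 1 m) (0\<^sub>m m 1) D3"
    by (rule eq_matI, auto simp: mdiag_def D3_def E_def)
  have FDF: "F * mdiag ?n (e # es3) * transpose_mat F = A'"
    unfolding FT Dblk A'blk unfolding F_def A3eq D3_def[symmetric] using P3 D3 E
    by (simp add: mult_four_block_mat[of _ 1 1 _ m _ m _ _ 1 _ m])
  have FTc: "transpose_mat F \<in> carrier_mat ?n ?n" using F by simp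
  have Dc: "mdiag ?n (e # es3) \<in> carrier_mat ?n ?n" by simp
  define P where "P = H * F"
  have P: "P \<in> carrier_mat ?n ?n" unfolding P_def using H F by simp
  have PT: "transpose_mat P = transpose_mat F * H" unfolding P_def using H F HT
    by (simp add: transpose_mult[of _ ?n ?n _ ?n])
  have PTP: "transpose_mat P * P = 1\<^sub>m ?n"
  proof -
    have "transpose_mat P * P = transpose_mat F * (H * (H * F))" unfolding PT unfolding P_def
      by (simp only: assoc_mult_mat[OF FTc H mult_carrier_mat[OF H F]])
    also have "\<dots> = 1\<^sub>m ?n" using HHX[OF F] FTF by simp
    finally show ?thesis .
  qed
  have "P * mdiag ?n (e # es3) * transpose_mat P = H * F * mdiag ?n (e # es3) * transpose_mat F * H"
    unfolding PT P_def[symmetric] by (simp only: assoc_mult_mat[OF mult_carrier_mat[OF P Dc] FTc H])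
  also have "\<dots> = H * (F * mdiag ?n (e # es3) * transpose_mat F) * H"
    using H F FTc Dc by (simp only: assoc_mult_mat[OF H F Dc] assoc_mult_mat[OF H mult_carrier_mat[OF F Dc] FTc])
  also have "\<dots> = H * A' * H" unfolding FDF ..
  also have "\<dots> = A" by (rule HA'H)
  finally have Aeq: "A = P * mdiag ?n (e # es3) * transpose_mat P" ..
  show ?case
    by (rule exI[of _ P], rule exI[of _ "e # es3"], insert P PTP les3 sorted cpA Aeq, auto)
qed

lemma prod_lin_remove1: "a \<in> set ys \<Longrightarrow>
  (\<Prod>b\<leftarrow>ys. [:- b, 1:]) = [:- a, 1:] * (\<Prod>b\<leftarrow>remove1 a ys. [:- (b::real), 1:])"
proof (induct ys)
  case (Cons b ys)
  show ?case
  proof (cases "b = a")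
    case False
    with Cons have IH: "(\<Prod>c\<leftarrow>ys. [:- c, 1:]) = [:- a, 1:] * (\<Prod>c\<leftarrow>remove1 a ys. [:- c, 1:])" by simp
    have "(\<Prod>c\<leftarrow>b # ys. [:- c, 1:]) = [:- b, 1:] * ([:- a, 1:] * (\<Prod>c\<leftarrow>remove1 a ys. [:- c, 1:]))"
      by (simp only: list.map prod_list.Cons IH)
    also have "\<dots> = [:- a, 1:] * ([:- b, 1:] * (\<Prod>c\<leftarrow>remove1 a ys. [:- c, 1:]))"
      by (rule mult.left_commute)
    also have "[:- b, 1:] * (\<Prod>c\<leftarrow>remove1 a ys. [:- c, 1:]) = (\<Prod>c\<leftarrow>remove1 a (b # ys). [:- c, 1:])"
      using False by (simp del: mult_pCons_left)
    finally show ?thesis .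
  qed simp
qed simp

lemma prod_lin_mset: "(\<Prod>b\<leftarrow>xs. [:- b, 1:]) = (\<Prod>b\<leftarrow>ys. [:- (b::real), 1:]) \<Longrightarrow> mset xs = mset ys"
proof (induct xs arbitrary: ys)
  case Nil
  show ?case
  proof (cases ys)
    case (Cons b ys')
    have "poly (\<Prod>b\<leftarrow>ys. [:- b, 1:]) b = 0" unfolding Cons by simp
    hence False unfolding Nil(1)[symmetric] by simp
    thus ?thesis ..
  qed simp
next
  case (Cons a xs ys)
  have "poly (\<Prod>b\<leftarrow>ys. [:- b, 1:]) a = 0" unfolding Cons(2)[symmetric] by simp
  hence a: "a \<in> set ys" using poly_prod_lin_root by blast
  have "[:- a, 1:] * (\<Prod>b\<leftarrow>xs. [:- b, 1:]) = [:- a, 1:] * (\<Prod>b\<leftarrow>remove1 a ys. [:- b, 1:])"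
    using Cons(2) prod_lin_remove1[OF a] by simp
  hence "(\<Prod>b\<leftarrow>xs. [:- b, 1:]) = (\<Prod>b\<leftarrow>remove1 a ys. [:- b, 1:])"
    by (subst (asm) mult_left_cancel) auto
  from Cons(1)[OF this] have "mset xs = mset (remove1 a ys)" .
  thus ?case using a by simp
qed

lemma sorted_eigenvalues_eq:
  assumes "sorted es" and "char_poly A = (\<Prod>a\<leftarrow>es. [:- a, 1:])"
  shows "sorted_eigenvalues A = es"
  unfolding sorted_eigenvalues_def
proof (rule the_equality)
  show "sorted es \<and> char_poly A = (\<Prod>a\<leftarrow>es. [:- a, 1:])" using assms by simp
next
  fix xs assume xs: "sorted xs \<and> char_poly A = (\<Prod>a\<leftarrow>xs. [:- a, 1:])"
  hence "mset xs = mset es" using assms(2) prod_lin_mset by metis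
  thus "xs = es" using xs assms(1) by (metis properties_for_sort sorted_sort_id)
qed

lemma quad_diag:
  assumes A: "A = P * mdiag n es * transpose_mat P" and P: "P \<in> carrier_mat n n"
    and u: "u \<in> carrier_vec n"
  shows "u \<bullet> (A *\<^sub>v u) = (\<Sum>i<n. es ! i * (transpose_mat P *\<^sub>v u) $ i * (transpose_mat P *\<^sub>v u) $ i)"
proof -
  let ?y = "transpose_mat P *\<^sub>v u"
  have y: "?y \<in> carrier_vec n" using P u by simp
  have "A *\<^sub>v u = P *\<^sub>v (mdiag n es *\<^sub>v ?y)" unfolding A using P u
    by (simp add: assoc_mult_mat_vec[of _ n n _ n])
  moreover have Dy: "mdiag n es *\<^sub>v ?y \<in> carrier_vec n" by (rule mult_mat_vec_carrier[OF mdiag_carrier y])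
  ultimately have "u \<bullet> (A *\<^sub>v u) = ?y \<bullet> (mdiag n es *\<^sub>v ?y)"
    using transpose_vec_mult_scalar[OF P Dy u] by simp
  also have "\<dots> = (\<Sum>i<n. es ! i * ?y $ i * ?y $ i)"
  proof -
    have "\<And>i. i < n \<Longrightarrow> (mdiag n es *\<^sub>v ?y) $ i = es ! i * ?y $ i"
    proof -
      fix i assume i: "i < n"
      have "(mdiag n es *\<^sub>v ?y) $ i = (\<Sum>j<n. (if i = j then es ! i else 0) * ?y $ j)"
        using i y by (simp add: mdiag_def mult_mat_vec_def scalar_prod_def lessThan_atLeast0)
      also have "\<dots> = (\<Sum>j<n. if i = j then es ! i * ?y $ j else 0)" by (intro sum.cong) auto
      also have "\<dots> = es ! i * ?y $ i" using i by simp
      finally show "(mdiag n es *\<^sub>v ?y) $ i = es ! i * ?y $ i" .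
    qed
    note dy = this
    have "?y \<bullet> (mdiag n es *\<^sub>v ?y) = (\<Sum>i<n. ?y $ i * (mdiag n es *\<^sub>v ?y) $ i)"
      unfolding scalar_prod_def using carrier_vecD[OF Dy] by (simp only: lessThan_atLeast0)
    also have "\<dots> = (\<Sum>i<n. es ! i * ?y $ i * ?y $ i)" by (intro sum.cong) (auto simp: dy)
    finally show ?thesis .
  qed
  finally show ?thesis .
qed

lemma norm_diag:
  fixes P :: "real mat"
  assumes P: "P \<in> carrier_mat n n" and PTP: "transpose_mat P * P = 1\<^sub>m n"
    and u: "u \<in> carrier_vec n"
  shows "u \<bullet> u = (\<Sum>i<n. (transpose_mat P *\<^sub>v u) $ i * (transpose_mat P *\<^sub>v u) $ i)"
proof -
  let ?y = "transpose_mat P *\<^sub>v u"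
  have y: "?y \<in> carrier_vec n" using P u by simp
  have PPT: "P * transpose_mat P = 1\<^sub>m n"
    using mat_mult_left_right_inverse[of "transpose_mat P" n P] P PTP by simp
  have "P *\<^sub>v ?y = (P * transpose_mat P) *\<^sub>v u"
    by (rule assoc_mult_mat_vec[symmetric]) (use P u in auto)
  hence "u = P *\<^sub>v ?y" unfolding PPT using u by simp
  hence "u \<bullet> u = u \<bullet> (P *\<^sub>v ?y)" by simp
  also have "\<dots> = ?y \<bullet> ?y" using transpose_vec_mult_scalar[OF P y u] by simp
  also have "?y \<bullet> ?y = (\<Sum>i<n. ?y $ i * ?y $ i)" unfolding scalar_prod_def
    using carrier_vecD[OF y] by (simp only: lessThan_atLeast0)
  finally show ?thesis .
qed

lemma eig_quad:
  assumes A: "A = P * mdiag n es * transpose_mat P" and P: "P \<in> carrier_mat n n"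
    and PTP: "transpose_mat P * P = 1\<^sub>m n" and i: "i < n"
  shows "es ! i = col P i \<bullet> (A *\<^sub>v col P i)"
proof -
  have c: "col P i \<in> carrier_vec n" using col_carrier_vec[OF i P] .
  have cP: "col P i = P *\<^sub>v unit_vec n i" using P i
    by (intro eq_vecI) (use P i in auto)
  have "transpose_mat P *\<^sub>v (P *\<^sub>v unit_vec n i) = (transpose_mat P * P) *\<^sub>v unit_vec n i"
    by (rule assoc_mult_mat_vec[symmetric]) (use P in auto)
  hence y: "transpose_mat P *\<^sub>v col P i = unit_vec n i"
    unfolding cP PTP by simp
  have "(\<Sum>k<n. es ! k * unit_vec n i $ k * unit_vec n i $ k) = (\<Sum>k<n. if k = i then es ! k else 0)"
    by (intro sum.cong) (auto simp: unit_vec_def)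
  also have "\<dots> = es ! i" using i by simp
  finally show ?thesis unfolding quad_diag[OF A P c] y by simp
qed

lemma rayleigh_second:
  assumes A: "A = P * mdiag n es * transpose_mat P" and P: "P \<in> carrier_mat n n"
    and PTP: "transpose_mat P * P = 1\<^sub>m n" and s: "sorted es" and len: "length es = n"
    and n: "2 \<le> n" and u: "u \<in> carrier_vec n" and orth: "col P 0 \<bullet> u = 0"
  shows "es ! 1 * (u \<bullet> u) \<le> u \<bullet> (A *\<^sub>v u)"
proof -
  let ?y = "transpose_mat P *\<^sub>v u"
  have y0: "?y $ 0 = 0" using P u orth n by (simp add: row_transpose)
  have "es ! 1 * (u \<bullet> u) = (\<Sum>i<n. es ! 1 * ?y $ i * ?y $ i)"
    unfolding norm_diag[OF P PTP u] by (simp add: sum_distrib_left mult.assoc)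
  also have "\<dots> \<le> (\<Sum>i<n. es ! i * ?y $ i * ?y $ i)"
  proof (rule sum_mono)
    fix i assume i: "i \<in> {..<n}"
    show "es ! 1 * ?y $ i * ?y $ i \<le> es ! i * ?y $ i * ?y $ i"
    proof (cases "i = 0")
      case True thus ?thesis using y0 by simp
    next
      case False
      hence "es ! 1 \<le> es ! i" using s len i by (auto intro: sorted_nth_mono)
      thus ?thesis by (simp add: mult.assoc mult_right_mono)
    qed
  qed
  also have "\<dots> = u \<bullet> (A *\<^sub>v u)" unfolding quad_diag[OF A P u] ..
  finally show ?thesis .
qed

definition lapQ :: "nat \<Rightarrow> (nat \<Rightarrow> nat \<Rightarrow> bool) \<Rightarrow> (nat \<Rightarrow> real) \<Rightarrow> real" where
  "lapQ n adj f = (\<Sum>i<n. \<Sum>j<n. if adj i j then (f i - f j)^2 else 0) / 2"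

lemma lap_carrier[simp]: "laplacian n adj \<in> carrier_mat n n"
  by (simp add: laplacian_def)

lemma lap_dim[simp]: "dim_row (laplacian n adj) = n" "dim_col (laplacian n adj) = n"
  by (simp_all add: laplacian_def)

lemma lap_sym:
  assumes g: "simple_graph n adj"
  shows "transpose_mat (laplacian n adj) = laplacian n adj"
  by (rule eq_matI) (use g in \<open>auto simp: laplacian_def simple_graph_def\<close>)

lemma degree_sum: "real (degree n adj i) = (\<Sum>j<n. if adj i j then 1 else 0)"
proof -
  have "{u. u < n \<and> adj i u} = {j \<in> {..<n}. adj i j}" by auto
  hence "degree n adj i = card {j \<in> {..<n}. adj i j}" unfolding degree_def by simp
  also have "real \<dots> = (\<Sum>j\<in>{j \<in> {..<n}. adj i j}. 1)" by simp
  also have "\<dots> = (\<Sum>j<n. if adj i j then 1 else 0)" by (rule sum.inter_filter) simp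
  finally show ?thesis .
qed

lemma lap_quad:
  assumes g: "simple_graph n adj"
  shows "vec n f \<bullet> (laplacian n adj *\<^sub>v vec n f) = lapQ n adj f"
proof -
  let ?L = "laplacian n adj"
  have irr: "\<And>i. \<not> adj i i" and sy: "\<And>i j. adj i j \<Longrightarrow> adj j i"
    using g unfolding simple_graph_def by auto
  have row: "(?L *\<^sub>v vec n f) $ i = (\<Sum>j<n. if adj i j then f i - f j else 0)" if i: "i < n" for i
  proof -
    have "(?L *\<^sub>v vec n f) $ i = (\<Sum>j<n. ?L $$ (i,j) * f j)"
      using i by (simp add: mult_mat_vec_def scalar_prod_def lessThan_atLeast0)
    also have "\<dots> = (\<Sum>j<n. (if i = j then real (degree n adj i) * f j else 0) + (if adj i j then - f j else 0))"
      using i irr by (intro sum.cong) (auto simp: laplacian_def)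
    also have "\<dots> = real (degree n adj i) * f i - (\<Sum>j<n. if adj i j then f j else 0)"
    proof -
      have neg: "(\<Sum>j<n. if adj i j then - f j else 0) = - (\<Sum>j<n. if adj i j then f j else 0)"
        by (subst sum_negf[symmetric]) (rule sum.cong, auto)
      show ?thesis using i by (simp add: sum.distrib neg)
    qed
    also have "\<dots> = (\<Sum>j<n. if adj i j then f i - f j else 0)"
      unfolding degree_sum by (simp add: sum_distrib_right sum_subtractf[symmetric] if_distrib[of "\<lambda>x. x * f i"] 
        cong: if_cong, intro sum.cong, auto)
    finally show ?thesis .
  qed
  define T where "T = (\<Sum>i<n. \<Sum>j<n. if adj i j then f i * (f i - f j) else 0)"
  have "vec n f \<bullet> (?L *\<^sub>v vec n f) = (\<Sum>i<n. f i * (?L *\<^sub>v vec n f) $ i)"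
    by (simp add: scalar_prod_def lessThan_atLeast0)
  also have "\<dots> = T" unfolding T_def
  proof (intro sum.cong refl)
    fix x assume x: "x \<in> {..<n}"
    have "f x * (?L *\<^sub>v vec n f) $ x = f x * (\<Sum>j<n. if adj x j then f x - f j else 0)"
      using x row by simp
    also have "\<dots> = (\<Sum>j<n. if adj x j then f x * (f x - f j) else 0)"
      by (simp add: sum_distrib_left if_distrib[of "\<lambda>y. f x * y"] cong: if_cong)
    finally show "f x * (?L *\<^sub>v vec n f) $ x = (\<Sum>j<n. if adj x j then f x * (f x - f j) else 0)" .
  qed
  finally have eqT: "vec n f \<bullet> (?L *\<^sub>v vec n f) = T" .
  have "T = (\<Sum>j<n. \<Sum>i<n. if adj i j then f i * (f i - f j) else 0)" unfolding T_def by (rule sum.swap)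
  also have "\<dots> = (\<Sum>i<n. \<Sum>j<n. if adj i j then f j * (f j - f i) else 0)"
    by (intro sum.cong refl) (use sy in auto)
  finally have T2: "T = \<dots>" .
  have "2 * T = (\<Sum>i<n. \<Sum>j<n. if adj i j then (f i - f j)^2 else 0)"
    unfolding mult_2 
    apply (subst (2) T2) unfolding T_def sum.distrib[symmetric]
    by (intro sum.cong refl) (auto simp: power2_eq_square algebra_simps)
  thus ?thesis unfolding eqT lapQ_def by simp
qed

lemma out_le:
  assumes g: "simple_graph n adj" and S: "strong_defensive_alliance n adj S" and j: "j \<in> S"
  shows "card {u\<in>{0..<n} - S. adj u j} \<le> max_degree n adj div 2"
proof -
  have sub: "S \<subseteq> {0..<n}" using S unfolding strong_defensive_alliance_def by auto
  have all: "card {u\<in>{0..<n} - S. adj u j} \<le> card {u\<in>S. adj u j}"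
    using S j unfolding strong_defensive_alliance_def by auto
  have jn: "j < n" using sub j by auto
  have "{u\<in>S. adj u j} \<union> {u\<in>{0..<n} - S. adj u j} = {u. u < n \<and> adj j u}"
    using sub g unfolding simple_graph_def by auto
  moreover have "card ({u\<in>S. adj u j} \<union> {u\<in>{0..<n} - S. adj u j}) = card {u\<in>S. adj u j} + card {u\<in>{0..<n} - S. adj u j}"
  proof (rule card_Un_disjoint)
    show "finite {u\<in>S. adj u j}" using sub by (rule_tac finite_subset[of _ "{0..<n}"]) auto
  qed auto
  ultimately have deg: "card {u\<in>S. adj u j} + card {u\<in>{0..<n} - S. adj u j} = degree n adj j"
    unfolding degree_def by simp
  have "degree n adj j \<le> max_degree n adj" unfolding max_degree_def
    by (rule Max_ge) (use jn in auto)
  with deg all show ?thesis by linarith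
qed

lemma cut_count:
  assumes g: "simple_graph n adj" and S: "strong_defensive_alliance n adj S"
  shows "(\<Sum>i<n. \<Sum>j<n. if adj i j \<and> i \<notin> S \<and> j \<in> S then 1 else 0) \<le> real (card S) * real (max_degree n adj div 2)"
proof -
  let ?k = "max_degree n adj div 2"
  have sub: "S \<subseteq> {0..<n}" using S unfolding strong_defensive_alliance_def by auto
  have "(\<Sum>i<n. \<Sum>j<n. if adj i j \<and> i \<notin> S \<and> j \<in> S then 1 else 0) = (\<Sum>j<n. \<Sum>i<n. if adj i j \<and> i \<notin> S \<and> j \<in> S then (1::real) else 0)"
    by (rule sum.swap)
  also have "\<dots> = (\<Sum>j<n. if j \<in> S then real (card {u\<in>{0..<n} - S. adj u j}) else 0)"
  proof (intro sum.cong refl)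
    fix j assume j: "j \<in> {..<n}"
    show "(\<Sum>i<n. if adj i j \<and> i \<notin> S \<and> j \<in> S then (1::real) else 0) = (if j \<in> S then real (card {u\<in>{0..<n} - S. adj u j}) else 0)"
    proof (cases "j \<in> S")
      case True
      have "{u\<in>{0..<n} - S. adj u j} = {i \<in> {..<n}. adj i j \<and> i \<notin> S}" by auto
      hence "real (card {u\<in>{0..<n} - S. adj u j}) = (\<Sum>i\<in>{i \<in> {..<n}. adj i j \<and> i \<notin> S}. 1)" by simp
      also have "\<dots> = (\<Sum>i<n. if adj i j \<and> i \<notin> S then 1 else 0)" by (rule sum.inter_filter) simp
      finally show ?thesis using True by simp
    qed simp
  qed
  also have "\<dots> \<le> (\<Sum>j<n. if j \<in> S then real ?k else 0)"
    by (rule sum_mono) (use out_le[OF g S] in auto)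
  also have "\<dots> = (\<Sum>j\<in>{j \<in> {..<n}. j \<in> S}. real ?k)" by (rule sum.inter_filter[symmetric]) simp
  also have "{j \<in> {..<n}. j \<in> S} = S" using sub by auto
  finally show ?thesis by simp
qed

lemma cut_Q:
  assumes g: "simple_graph n adj" and S: "strong_defensive_alliance n adj S"
  shows "lapQ n adj (\<lambda>i. if i \<in> S then real n - real (card S) else - real (card S))
     \<le> real n ^ 2 * (real (card S) * real (max_degree n adj div 2))"
proof -
  let ?x = "\<lambda>i. if i \<in> S then real n - real (card S) else - real (card S)"
  let ?c = "\<lambda>i j. if adj i j \<and> i \<notin> S \<and> j \<in> S then 1 else (0::real)"
  have sy: "\<And>i j. adj i j \<Longrightarrow> adj j i" using g unfolding simple_graph_def by auto
  have pt: "(if adj i j then (?x i - ?x j)^2 else 0) = real n ^ 2 * (?c i j + ?c j i)" for i j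
    using sy[of i j] sy[of j i] by (auto simp: power2_eq_square algebra_simps)
  have "(\<Sum>i<n. \<Sum>j<n. if adj i j then (?x i - ?x j)^2 else 0)
      = real n ^ 2 * ((\<Sum>i<n. \<Sum>j<n. ?c i j) + (\<Sum>i<n. \<Sum>j<n. ?c j i))"
    unfolding pt by (simp add: sum_distrib_left sum.distrib distrib_left)
  also have "(\<Sum>i<n. \<Sum>j<n. ?c j i) = (\<Sum>i<n. \<Sum>j<n. ?c i j)" by (rule sum.swap)
  finally have "lapQ n adj ?x = real n ^ 2 * (\<Sum>i<n. \<Sum>j<n. ?c i j)" unfolding lapQ_def by simp
  also have "\<dots> \<le> real n ^ 2 * (real (card S) * real (max_degree n adj div 2))"
    by (rule mult_left_mono[OF cut_count[OF g S]]) simp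
  finally show ?thesis .
qed

lemma sum_x:
  assumes sub: "S \<subseteq> {0..<n}"
  shows "(\<Sum>i<n. if i \<in> S then real n - real (card S) else - real (card S)) = 0"
    and "(\<Sum>i<n. (if i \<in> S then real n - real (card S) else - real (card S))^2) = real (card S) * (real n - real (card S)) * real n"
proof -
  have fin: "finite S" using sub finite_subset by blast
  have i1: "{..<n} \<inter> S = S" using sub by auto
  have c2: "card ({..<n} - S) = n - card S" using sub fin by (subst card_Diff_subset) (auto simp: lessThan_atLeast0)
  have le: "card S \<le> n" using sub card_mono[of "{0..<n}" S] by auto
  have "(\<Sum>i<n. if i \<in> S then real n - real (card S) else - real (card S))
     = real (card S) * (real n - real (card S)) + real (n - card S) * (- real (card S))"
    by (simp add: sum.If_cases i1 c2 Diff_eq[symmetric])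
  thus "(\<Sum>i<n. if i \<in> S then real n - real (card S) else - real (card S)) = 0" using le by (simp add: of_nat_diff algebra_simps)
  have "(\<Sum>i<n. (if i \<in> S then real n - real (card S) else - real (card S))^2)
     = (\<Sum>i<n. if i \<in> S then (real n - real (card S))^2 else (real (card S))^2)"
    by (intro sum.cong) auto
  also have "\<dots> = real (card S) * (real n - real (card S))^2 + real (n - card S) * (real (card S))^2"
    by (simp add: sum.If_cases i1 c2 Diff_eq[symmetric])
  also have "\<dots> = real (card S) * (real n - real (card S)) * real n" using le
    by (simp add: of_nat_diff power2_eq_square algebra_simps)
  finally show "(\<Sum>i<n. (if i \<in> S then real n - real (card S) else - real (card S))^2) = real (card S) * (real n - real (card S)) * real n" .
qed

lemma key_ineq:
  fixes c :: "nat \<Rightarrow> real"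
  assumes g: "simple_graph n adj" and S: "strong_defensive_alliance n adj S"
    and mu: "0 < \<mu>"
    and R: "\<And>f. (\<Sum>i<n. c i * f i) = 0 \<Longrightarrow> \<mu> * (\<Sum>i<n. (f i)^2) \<le> lapQ n adj f"
    and n: "0 < n"
  shows "\<mu> * (real n - real (card S)) \<le> real n * real (max_degree n adj div 2)"
proof -
  let ?s = "real (card S)"
  let ?k = "real (max_degree n adj div 2)"
  define x where "x = (\<lambda>i. if i \<in> S then real n - ?s else - ?s)"
  have sub: "S \<subseteq> {0..<n}" and Sne: "S \<noteq> {}" using S unfolding strong_defensive_alliance_def by auto
  have fin: "finite S" using sub finite_subset by blast
  have spos: "?s > 0" using Sne fin by (simp add: card_gt_0_iff)
  define B where "B = (\<Sum>i<n. c i)"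
  have B: "B \<noteq> 0"
  proof
    assume "B = 0"
    hence "(\<Sum>i<n. c i * (\<lambda>_. 1) i) = 0" unfolding B_def by simp
    from R[OF this] have "\<mu> * real n \<le> lapQ n adj (\<lambda>_. 1)" by simp
    also have "lapQ n adj (\<lambda>_. 1) = 0" unfolding lapQ_def by (simp cong: if_cong)
    finally show False using mu n by (metis mult_pos_pos of_nat_0_less_iff not_le)
  qed
  define a where "a = (\<Sum>i<n. c i * x i)"
  define b where "b = - B"
  define f where "f = (\<lambda>i. a + b * x i)"
  have "(\<Sum>i<n. c i * f i) = (\<Sum>i<n. a * c i + b * (c i * x i))" unfolding f_def by (simp add: algebra_simps)
  also have "\<dots> = a * (\<Sum>i<n. c i) + b * (\<Sum>i<n. c i * x i)" by (simp add: sum.distrib sum_distrib_left)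
  finally have "(\<Sum>i<n. c i * f i) = a * B + b * a" unfolding a_def B_def .
  hence orth: "(\<Sum>i<n. c i * f i) = 0" unfolding b_def by simp
  have Qf: "lapQ n adj f = b^2 * lapQ n adj x"
    unfolding lapQ_def f_def
    by (simp add: sum_distrib_left power2_eq_square algebra_simps if_distrib[of "\<lambda>y. b * (b * y)"] cong: if_cong)
  have sx: "(\<Sum>i<n. x i) = 0" and sxx: "(\<Sum>i<n. (x i)^2) = ?s * (real n - ?s) * real n"
    unfolding x_def using sum_x[OF sub] by auto
  have "(\<Sum>i<n. (f i)^2) = real n * a^2 + 2 * a * b * (\<Sum>i<n. x i) + b^2 * (\<Sum>i<n. (x i)^2)"
    unfolding f_def by (simp add: power2_eq_square algebra_simps sum.distrib sum_distrib_left)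
  hence ff: "(\<Sum>i<n. (f i)^2) \<ge> b^2 * (\<Sum>i<n. (x i)^2)" unfolding sx by simp
  have b2: "b^2 > 0" using B unfolding b_def by simp
  have "b^2 * (\<mu> * (\<Sum>i<n. (x i)^2)) \<le> \<mu> * (\<Sum>i<n. (f i)^2)"
    using mult_left_mono[OF ff, of \<mu>] mu by (simp add: algebra_simps)
  also have "\<dots> \<le> b^2 * lapQ n adj x" using R[OF orth] unfolding Qf .
  finally have "\<mu> * (\<Sum>i<n. (x i)^2) \<le> lapQ n adj x" using b2 by simp
  also have "\<dots> \<le> real n ^ 2 * (?s * ?k)" unfolding x_def by (rule cut_Q[OF g S])
  finally have "(\<mu> * (real n - ?s)) * (?s * real n) \<le> (real n * ?k) * (?s * real n)"
    unfolding sxx by (simp add: power2_eq_square algebra_simps)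
  thus ?thesis using spos n by (simp add: mult.commute)
qed

theorem theorem2:
  fixes n :: nat and adj :: "nat \<Rightarrow> nat \<Rightarrow> bool"
  assumes "simple_graph n adj"
    and "connected_graph n adj"
    and "n \<ge> 2"
  shows "real (strong_defensive_alliance_number n adj) \<ge>
    real_of_int \<lceil>real n * (algebraic_connectivity n adj - real (max_degree n adj div 2))
                 / algebraic_connectivity n adj\<rceil>"
proof -
  have g: "simple_graph n adj" and n2: "2 \<le> n" using assms by auto
  let ?L = "laplacian n adj"
  obtain P es where P: "P \<in> carrier_mat n n" and PTP: "transpose_mat P * P = 1\<^sub>m n"
    and len: "length es = n" and srt: "sorted es" and cp: "char_poly ?L = (\<Prod>a\<leftarrow>es. [:- a, 1:])"
    and Leq: "?L = P * mdiag n es * transpose_mat P"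
    using spectral[OF lap_carrier lap_sym[OF g]] by blast
  define \<mu> where "\<mu> = algebraic_connectivity n adj"
  have mu: "\<mu> = es ! 1" unfolding \<mu>_def algebraic_connectivity_def
    using sorted_eigenvalues_eq[OF srt cp] by simp
  have colv: "col P j = vec n (\<lambda>i. col P j $ i)" if "j < n" for j
    using P that by (intro eq_vecI) auto
  have qv: "w \<bullet> (?L *\<^sub>v w) = lapQ n adj (\<lambda>i. w $ i)" if w: "w \<in> carrier_vec n" for w
  proof -
    have e: "vec n (\<lambda>i. w $ i) = w" using w by (intro eq_vecI) auto
    show ?thesis using lap_quad[OF g, of "\<lambda>i. w $ i"] unfolding e .
  qed
  have mu0: "0 \<le> \<mu>"
  proof -
    have "\<mu> = col P 1 \<bullet> (?L *\<^sub>v col P 1)" unfolding mu by (rule eig_quad[OF Leq P PTP], use n2 in simp)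
    also have "\<dots> = lapQ n adj (\<lambda>i. col P 1 $ i)" by (rule qv) (use P n2 in auto)
    also have "\<dots> \<ge> 0" unfolding lapQ_def by (intro divide_nonneg_nonneg sum_nonneg) auto
    finally show ?thesis .
  qed
  have R: "\<mu> * (\<Sum>i<n. (f i)^2) \<le> lapQ n adj f" if orth: "(\<Sum>i<n. col P 0 $ i * f i) = 0" for f
  proof -
    have u: "vec n f \<in> carrier_vec n" by simp
    have o: "col P 0 \<bullet> vec n f = 0" using orth P n2 by (simp add: scalar_prod_def lessThan_atLeast0)
    have "\<mu> * (vec n f \<bullet> vec n f) \<le> vec n f \<bullet> (?L *\<^sub>v vec n f)"
      unfolding mu by (rule rayleigh_second[OF Leq P PTP srt len n2 u o])
    thus ?thesis unfolding lap_quad[OF g] by (simp add: scalar_prod_def lessThan_atLeast0 power2_eq_square)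
  qed
  let ?k = "max_degree n adj div 2"
  define C where "C = {card S | S. strong_defensive_alliance n adj S}"
  have V: "strong_defensive_alliance n adj {0..<n}" unfolding strong_defensive_alliance_def using n2 by auto
  have Cne: "C \<noteq> {}" unfolding C_def using V by auto
  have Cfin: "finite C"
  proof (rule finite_subset[of _ "{..n}"])
    show "C \<subseteq> {..n}" unfolding C_def strong_defensive_alliance_def
      using card_mono[of "{0..<n}"] by fastforce
  qed simp
  obtain S where S: "strong_defensive_alliance n adj S" and cS: "card S = strong_defensive_alliance_number n adj"
    using Min_in[OF Cfin Cne] unfolding strong_defensive_alliance_number_def C_def[symmetric]
    unfolding C_def by auto
  have sub: "S \<subseteq> {0..<n}" using S unfolding strong_defensive_alliance_def by auto
  have sle: "card S \<le> n" using card_mono[OF _ sub] by simp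
  have main: "real n * (\<mu> - real ?k) / \<mu> \<le> real (card S)"
  proof (cases "\<mu> = 0")
    case True thus ?thesis by simp
  next
    case False
    hence mpos: "\<mu> > 0" using mu0 by simp
    have key: "\<mu> * (real n - real (card S)) \<le> real n * real ?k"
      by (rule key_ineq[OF g S mpos R]) (use n2 in auto)
    have "real n * (\<mu> - real ?k) / \<mu> = real n - real n * real ?k / \<mu>"
      using mpos by (simp add: field_simps)
    also have "real n * real ?k / \<mu> \<ge> real n - real (card S)"
      using key mpos by (simp add: field_simps)
    hence "real n - real n * real ?k / \<mu> \<le> real (card S)" by simp
    finally show ?thesis .
  qed
  hence "\<lceil>real n * (\<mu> - real ?k) / \<mu>\<rceil> \<le> int (card S)" by (simp add: ceiling_le_iff)
  hence "real_of_int \<lceil>real n * (\<mu> - real ?k) / \<mu>\<rceil> \<le> real (card S)" by linarith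
  thus ?thesis unfolding \<mu>_def cS .
qed


end
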